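(* Let $\gamma\in(-2,0)$, $p\in[1,\infty)$, and let $m$ be a positive weight function on $\mathbb{R}^3$. If $1\le q<3/|\gamma|$, then $$\|Q(g,f)\|_{L^p(m)}\lesssim \|g\|_{L^1(\langle v\rangle^{\gamma+2})}\,\|\nabla^2 f\|_{L^p(m\langle v\rangle^{\gamma+2})}+\|g\|_{L^1}\,\|f\|_{L^p(m)}+\|g\|_{L^{q/(q-1)}}\,\|f\|_{L^p(m)}.$$
   Context: $\langle v\rangle=(1+|v|^2)^{1/2}$; $\|u\|_{L^p(w)}=\|wu\|_{L^p}$. $a_{ij}(z)=|z|^{\gamma+2}(\delta_{ij}-z_iz_j/|z|^2)$, $c(z)=-2(\gamma+3)|z|^\gamma$, and $Q(g,f)=(a_{ij}*g)\partial_{ij}f-(c*g)f$ (summation over repeated indices) is the Landau operator. $q/(q-1)$ is interpreted as $\infty$ when $q=1$. Implicit constants depend only on $\gamma,p,q$. *)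

theory Defs
  imports "HOL-Analysis.Analysis" "HOL-Probability.Essential_Supremum"
begin

type_synonym R3 = "real ^ 3"

definition jb :: "R3 \<Rightarrow> real" where
  "jb v = sqrt (1 + (norm v)\<^sup>2)"

definition Lp_norm :: "real \<Rightarrow> (R3 \<Rightarrow> real) \<Rightarrow> (R3 \<Rightarrow> real) \<Rightarrow> real" where
  "Lp_norm p w u = (\<integral>x. \<bar>w x * u x\<bar> powr p \<partial>lborel) powr (1 / p)"

definition in_Lp :: "real \<Rightarrow> (R3 \<Rightarrow> real) \<Rightarrow> (R3 \<Rightarrow> real) \<Rightarrow> bool" where
  "in_Lp p w u \<longleftrightarrow> u \<in> borel_measurable lborel \<and>
      integrable lborel (\<lambda>x. \<bar>w x * u x\<bar> powr p)"

definition Linf_norm :: "(R3 \<Rightarrow> real) \<Rightarrow> real" where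
  "Linf_norm u = real_of_ereal (esssup lborel (\<lambda>x. ereal \<bar>u x\<bar>))"

definition dual_norm :: "real \<Rightarrow> (R3 \<Rightarrow> real) \<Rightarrow> real" where
  "dual_norm q g = (if q = 1 then Linf_norm g else Lp_norm (q / (q - 1)) (\<lambda>_. 1) g)"

definition in_dual :: "real \<Rightarrow> (R3 \<Rightarrow> real) \<Rightarrow> bool" where
  "in_dual q g \<longleftrightarrow> (if q = 1
      then g \<in> borel_measurable lborel \<and> esssup lborel (\<lambda>x. ereal \<bar>g x\<bar>) < \<infinity>
      else in_Lp (q / (q - 1)) (\<lambda>_. 1) g)"

definition partial :: "3 \<Rightarrow> (R3 \<Rightarrow> real) \<Rightarrow> R3 \<Rightarrow> real" where
  "partial i f x = deriv (\<lambda>t. f (x + t *\<^sub>R axis i 1)) 0"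

definition C2 :: "(R3 \<Rightarrow> real) \<Rightarrow> bool" where
  "C2 f \<longleftrightarrow> (\<forall>x. f differentiable (at x)) \<and>
     (\<forall>j x. partial j f differentiable (at x)) \<and>
     (\<forall>i j. continuous_on UNIV (partial i (partial j f)))"

definition hess_norm :: "(R3 \<Rightarrow> real) \<Rightarrow> R3 \<Rightarrow> real" where
  "hess_norm f v = sqrt (\<Sum>i\<in>UNIV. \<Sum>j\<in>UNIV. (partial i (partial j f) v)\<^sup>2)"

definition akernel :: "real \<Rightarrow> 3 \<Rightarrow> 3 \<Rightarrow> R3 \<Rightarrow> real" where
  "akernel \<gamma> i j z = norm z powr (\<gamma> + 2) *
      ((if i = j then 1 else 0) - z $ i * z $ j / (norm z)\<^sup>2)"

definition ckernel :: "real \<Rightarrow> R3 \<Rightarrow> real" where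
  "ckernel \<gamma> z = - 2 * (\<gamma> + 3) * norm z powr \<gamma>"

definition conv :: "(R3 \<Rightarrow> real) \<Rightarrow> (R3 \<Rightarrow> real) \<Rightarrow> R3 \<Rightarrow> real" where
  "conv k g v = (\<integral>w. k (v - w) * g w \<partial>lborel)"

definition Landau_Q :: "real \<Rightarrow> (R3 \<Rightarrow> real) \<Rightarrow> (R3 \<Rightarrow> real) \<Rightarrow> R3 \<Rightarrow> real" where
  "Landau_Q \<gamma> g f v =
     (\<Sum>i\<in>UNIV. \<Sum>j\<in>UNIV. conv (akernel \<gamma> i j) g v * partial i (partial j f) v)
     - conv (ckernel \<gamma>) g v * f v"

end

theory Submission
  imports Defs
begin


lemma dyadic:
  fixes x :: real assumes "0 < x" "x < 1"
  shows "\<exists>k::nat. (1/2)^(Suc k) < x \<and> x \<le> (1/2)^k"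
proof -
  define k where "k = nat \<lfloor>log 2 (1/x)\<rfloor>"
  have l: "0 < log 2 (1/x)" using assms by simp
  have k1: "real k \<le> log 2 (1/x)" using l unfolding k_def by linarith
  have k2: "log 2 (1/x) < real k + 1" using l unfolding k_def by linarith
  have "2 ^ k \<le> 1/x" using k1 assms by (simp add: le_log_iff powr_realpow)
  hence a: "x \<le> (1/2)^k" using assms by (simp add: field_simps)
  have "1/x < 2 ^ (Suc k)" using k2 assms
    by (metis log_less_iff of_nat_Suc one_less_numeral_iff powr_realpow semiring_norm(76) zero_less_divide_1_iff zero_less_numeral add.commute)
  hence b: "(1/2)^(Suc k) < x" using assms by (simp add: field_simps)
  show ?thesis using a b by blast
qed

lemma powr_term: "(2::real) powr (-(real k + 1) * \<alpha>) = 2 powr (-\<alpha>) * (2 powr (-\<alpha>))^k"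
proof -
  have "(2::real) powr (-(real k + 1) * \<alpha>) = 2 powr (-\<alpha>) * 2 powr (-\<alpha> * real k)"
    by (simp add: powr_add[symmetric] algebra_simps)
  also have "2 powr (-\<alpha> * real k) = (2 powr (-\<alpha>)) powr real k" by (simp add: powr_powr)
  also have "\<dots> = (2 powr (-\<alpha>))^k" by (simp add: powr_realpow)
  finally show ?thesis .
qed

lemma ball_powr_finite:
  fixes \<alpha> :: real assumes a1: "-3 < \<alpha>" and a2: "\<alpha> \<le> 0"
  shows "(\<integral>\<^sup>+z. ennreal (indicator (ball (0::real^3) 1) z * norm z powr \<alpha>) \<partial>lborel) < \<infinity>"
proof -
  define t where "t = (\<lambda>k::nat. \<lambda>z::real^3. ennreal (2 powr (-(real k+1)*\<alpha>)) * indicator (ball 0 (2*(1/2)^k)) z)"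
  have pw: "ennreal (indicator (ball (0::real^3) 1) z * norm z powr \<alpha>) \<le> (\<Sum>k. t k z)" for z
  proof (cases "z \<in> ball 0 1 \<and> z \<noteq> 0")
    case False thus ?thesis by (auto simp: indicator_def)
  next
    case True
    hence z: "0 < norm z" "norm z < 1" by auto
    obtain k where k: "(1/2)^(Suc k) < norm z" "norm z \<le> (1/2)^k" using dyadic[OF z] by blast
    have "norm z powr \<alpha> \<le> ((1/2)^(Suc k)) powr \<alpha>"
      using k(1) a2 by (intro powr_mono2') auto
    also have "((1/2::real)^(Suc k)) = 2 powr (-(real k+1))"
    proof -
      have "(1/2::real)^(Suc k) = 1 / 2^(Suc k)" by (simp add: power_one_over)
      also have "\<dots> = 1 / 2 powr (real (Suc k))" by (subst powr_realpow) auto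
      also have "\<dots> = 2 powr (-(real k + 1))" by (metis powr_minus_divide of_nat_Suc add.commute)
      finally show ?thesis .
    qed
    also have "(2 powr (-(real k+1))) powr \<alpha> = 2 powr (-(real k+1)*\<alpha>)"
      by (simp add: powr_powr)
    finally have e1: "norm z powr \<alpha> \<le> 2 powr (-(real k+1)*\<alpha>)" .
    have "z \<in> ball 0 (2*(1/2)^k)" 
    proof -
      have "0 < (1/2::real)^k" by simp
      hence "norm z < 2*(1/2::real)^k" using k(2) by linarith
      thus ?thesis by (simp add: dist_norm)
    qed
    hence "ennreal (indicator (ball (0::real^3) 1) z * norm z powr \<alpha>) \<le> t k z"
      using True e1 by (simp add: t_def indicator_def ennreal_leI)
    also have "t k z \<le> (\<Sum>k. t k z)" using ennreal_suminf_lessD linorder_le_less_linear by blast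
    finally show ?thesis .
  qed
  define U where "U = unit_ball_vol (real DIM(real^3))"
  define \<rho> where "\<rho> = 2 powr (-\<alpha>) / 8"
  have \<rho>0: "0 \<le> \<rho>" unfolding \<rho>_def by simp
  have \<rho>1: "\<rho> < 1" unfolding \<rho>_def
  proof -
    have "(2::real) powr (-\<alpha>) < 2 powr 3" using a1 by (intro powr_less_mono) auto
    thus "2 powr (-\<alpha>) / 8 < 1" by simp
  qed
  have U0: "0 \<le> U" unfolding U_def by simp
  have int_t: "(\<integral>\<^sup>+z. t k z \<partial>lborel) = ennreal (8 * U * 2 powr (-\<alpha>) * \<rho>^k)" for k
  proof -
    have h8: "(2::real)^(k*3) = 8^k" by (simp add: mult.commute[of k] power_mult)
    have eq: "2 powr (-(real k+1)*\<alpha>) * (U * (2*(1/2)^k)^3) = 8 * U * 2 powr (-\<alpha>) * \<rho>^k"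
      using h8 unfolding powr_term \<rho>_def by (simp add: power_mult_distrib power_divide field_simps flip: power_mult)
    have "(\<integral>\<^sup>+z. t k z \<partial>lborel) = ennreal (2 powr (-(real k+1)*\<alpha>)) * emeasure lborel (ball (0::real^3) (2*(1/2)^k))"
      unfolding t_def by (rule nn_integral_cmult_indicator) simp
    also have "\<dots> = ennreal (2 powr (-(real k+1)*\<alpha>) * (U * (2*(1/2)^k)^3))"
      by (simp add: emeasure_ball U_def ennreal_mult')
    finally show ?thesis by (simp only: eq)
  qed
  have "(\<integral>\<^sup>+z. ennreal (indicator (ball (0::real^3) 1) z * norm z powr \<alpha>) \<partial>lborel) \<le> (\<integral>\<^sup>+z. (\<Sum>k. t k z) \<partial>lborel)"
    by (rule nn_integral_mono) (rule pw)
  also have "\<dots> = (\<Sum>k. \<integral>\<^sup>+z. t k z \<partial>lborel)"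
  proof (rule nn_integral_suminf)
    fix k show "t k \<in> borel_measurable lborel" unfolding t_def by (intro borel_measurable_times_ennreal borel_measurable_const borel_measurable_indicator) simp
  qed
  also have "\<dots> = (\<Sum>k. ennreal (8 * U * 2 powr (-\<alpha>) * \<rho>^k))" by (simp only: int_t)
  also have "\<dots> = ennreal (\<Sum>k. 8 * U * 2 powr (-\<alpha>) * \<rho>^k)"
    using \<rho>0 \<rho>1 U0 by (intro suminf_ennreal2) (auto intro!: summable_mult summable_geometric)
  also have "\<dots> < \<infinity>" by simp
  finally show ?thesis .
qed


lemma nn_translate:
  fixes h :: "real^3 \<Rightarrow> ennreal"
  assumes h: "h \<in> borel_measurable borel"
  shows "(\<integral>\<^sup>+w. h (w - v) \<partial>lborel) = (\<integral>\<^sup>+z. h z \<partial>lborel)"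
proof -
  have "(\<integral>\<^sup>+z. h z \<partial>lborel) = (\<integral>\<^sup>+z. h z \<partial>(distr lborel borel ((+) (-v))))"
    by (simp add: lborel_distr_plus)
  also have "\<dots> = (\<integral>\<^sup>+w. h (-v + w) \<partial>lborel)"
    using h by (intro nn_integral_distr) auto
  finally show ?thesis by simp
qed

lemma akernel_meas[measurable]: "akernel \<gamma> i j \<in> borel_measurable borel"
  unfolding akernel_def by measurable

lemma ckernel_meas[measurable]: "ckernel \<gamma> \<in> borel_measurable borel"
  unfolding ckernel_def by measurable

lemma akernel_le: assumes "0 < s" "s = \<gamma> + 2" shows "\<bar>akernel \<gamma> i j z\<bar> \<le> norm z powr s"
proof (cases "z = 0")
  case True thus ?thesis using assms by (simp add: akernel_def)
next
  case False
  have zi: "\<bar>z $ i\<bar> \<le> norm z" "\<bar>z $ j\<bar> \<le> norm z" by (simp_all add: component_le_norm_cart)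
  have n: "0 < (norm z)\<^sup>2" using False by simp
  have "\<bar>z $ i\<bar> * \<bar>z $ j\<bar> \<le> norm z * norm z"
    using zi by (intro mult_mono) auto
  hence "\<bar>z $ i * z $ j\<bar> \<le> (norm z)\<^sup>2" by (simp add: abs_mult power2_eq_square)
  hence q: "\<bar>z $ i * z $ j / (norm z)\<^sup>2\<bar> \<le> 1" using n by (simp add: divide_le_eq_1 abs_div)
  have r: "\<bar>(if i = j then 1 else 0) - z $ i * z $ j / (norm z)\<^sup>2\<bar> \<le> 1"
  proof (cases "i = j")
    case True
    have "0 \<le> z $ i * z $ j / (norm z)\<^sup>2" using True n by simp
    thus ?thesis using True q by simp
  next
    case False thus ?thesis using q by simp
  qed
  have "\<bar>akernel \<gamma> i j z\<bar> = norm z powr (\<gamma>+2) * \<bar>(if i = j then 1 else 0) - z $ i * z $ j / (norm z)\<^sup>2\<bar>"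
    unfolding akernel_def abs_mult by simp
  also have "\<dots> \<le> norm z powr (\<gamma>+2) * 1"
    using r by (intro mult_left_mono) auto
  finally show ?thesis using assms by simp
qed

lemma jb_ge: "norm v \<le> jb v" "1 \<le> jb v"
  unfolding jb_def by (auto intro!: real_le_rsqrt)

lemma dist_powr_le:
  assumes "0 < s" "s \<le> 2"
  shows "norm (v - w) powr s \<le> 4 * (jb v powr s * jb w powr s)"
proof -
  have a: "1 \<le> jb v" "1 \<le> jb w" "norm v \<le> jb v" "norm w \<le> jb w" using jb_ge by auto
  have "0 \<le> (jb v - 1) * (jb w - 1)" using a by simp
  hence b: "jb v + jb w \<le> 2 * (jb v * jb w)" using a by (simp add: algebra_simps)
  have "norm (v - w) \<le> norm v + norm w" by (rule norm_triangle_ineq4)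
  also have "\<dots> \<le> 2 * (jb v * jb w)" using a b by linarith
  finally have "norm (v - w) powr s \<le> (2 * (jb v * jb w)) powr s"
    using assms by (intro powr_mono2) auto
  also have "\<dots> = 2 powr s * (jb v powr s * jb w powr s)"
    using a by (simp add: powr_mult)
  also have "2 powr s \<le> 2 powr 2" using assms by (intro powr_mono) auto
  hence "2 powr s * (jb v powr s * jb w powr s) \<le> 4 * (jb v powr s * jb w powr s)"
    by (intro mult_right_mono) auto
  finally show ?thesis .
qed

lemma conv_bound:
  assumes "(\<lambda>w. k (v - w) * g w) \<in> borel_measurable lborel"
    "(\<integral>\<^sup>+w. ennreal \<bar>k (v - w) * g w\<bar> \<partial>lborel) \<le> ennreal B" "0 \<le> B"
  shows "\<bar>conv k g v\<bar> \<le> B"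
proof -
  have "\<bar>conv k g v\<bar> \<le> (\<integral>w. \<bar>k (v - w) * g w\<bar> \<partial>lborel)"
    unfolding conv_def by (rule integral_abs_bound)
  also have "\<dots> = enn2real (\<integral>\<^sup>+w. ennreal \<bar>k (v - w) * g w\<bar> \<partial>lborel)"
    using assms(1) by (intro integral_eq_nn_integral) auto
  also have "\<dots> \<le> B" using assms by (intro enn2real_leI) auto
  finally show ?thesis .
qed

lemma conv_meas:
  assumes [measurable]: "k \<in> borel_measurable borel" "g \<in> borel_measurable lborel"
  shows "conv k g \<in> borel_measurable lborel"
  unfolding conv_def by measurable



lemma abs_powr_one[simp]: "\<bar>x::real\<bar> powr 1 = \<bar>x\<bar>"
  by (simp add: powr_one)

lemma L1_norm_eq: "Lp_norm 1 w g = (\<integral>x. \<bar>w x * g x\<bar> \<partial>lborel)"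
  unfolding Lp_norm_def by (simp add: powr_one integral_nonneg_AE)

lemma conv_a_bound:
  assumes g: "in_Lp 1 (\<lambda>v. jb v powr (\<gamma>+2)) g" and \<gamma>: "-2 < \<gamma>" "\<gamma> < 0"
  shows "\<bar>conv (akernel \<gamma> i j) g v\<bar> \<le> 4 * jb v powr (\<gamma>+2) * Lp_norm 1 (\<lambda>v. jb v powr (\<gamma>+2)) g"
proof -
  define s where "s = \<gamma> + 2"
  have s: "0 < s" "s \<le> 2" using \<gamma> unfolding s_def by auto
  have gm[measurable]: "g \<in> borel_measurable lborel" using g unfolding in_Lp_def by simp
  have gi: "integrable lborel (\<lambda>w. \<bar>jb w powr s * g w\<bar>)" using g unfolding in_Lp_def s_def by simp
  have jbp: "0 < jb w" for w using jb_ge(2)[of w] by linarith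
  have pw: "ennreal \<bar>akernel \<gamma> i j (v - w) * g w\<bar> \<le> ennreal (4 * jb v powr s) * ennreal \<bar>jb w powr s * g w\<bar>" for w
  proof -
    have "\<bar>akernel \<gamma> i j (v - w) * g w\<bar> = \<bar>akernel \<gamma> i j (v - w)\<bar> * \<bar>g w\<bar>" by (simp add: abs_mult)
    also have "\<dots> \<le> norm (v - w) powr s * \<bar>g w\<bar>"
      using akernel_le[OF s(1) s_def] by (intro mult_right_mono) auto
    also have "\<dots> \<le> 4 * (jb v powr s * jb w powr s) * \<bar>g w\<bar>"
      using dist_powr_le[OF s] by (intro mult_right_mono) auto
    also have "\<dots> = (4 * jb v powr s) * \<bar>jb w powr s * g w\<bar>"
      using jbp[of w] by (simp add: abs_mult)
    finally show ?thesis by (simp add: ennreal_mult'[symmetric] ennreal_leI)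
  qed
  have "(\<integral>\<^sup>+w. ennreal \<bar>akernel \<gamma> i j (v - w) * g w\<bar> \<partial>lborel)
      \<le> (\<integral>\<^sup>+w. ennreal (4 * jb v powr s) * ennreal \<bar>jb w powr s * g w\<bar> \<partial>lborel)"
    by (rule nn_integral_mono) (rule pw)
  also have "\<dots> = ennreal (4 * jb v powr s) * (\<integral>\<^sup>+w. ennreal \<bar>jb w powr s * g w\<bar> \<partial>lborel)"
    by (rule nn_integral_cmult) (use gi in auto)
  also have "(\<integral>\<^sup>+w. ennreal \<bar>jb w powr s * g w\<bar> \<partial>lborel) = ennreal (\<integral>w. \<bar>jb w powr s * g w\<bar> \<partial>lborel)"
    by (rule nn_integral_eq_integral) (use gi in auto)
  also have "ennreal (4 * jb v powr s) * ennreal (\<integral>w. \<bar>jb w powr s * g w\<bar> \<partial>lborel)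
      = ennreal (4 * jb v powr (\<gamma>+2) * Lp_norm 1 (\<lambda>v. jb v powr (\<gamma>+2)) g)"
    unfolding L1_norm_eq s_def by (simp add: ennreal_mult'[symmetric])
  finally have nn: "(\<integral>\<^sup>+w. ennreal \<bar>akernel \<gamma> i j (v - w) * g w\<bar> \<partial>lborel) \<le> ennreal (4 * jb v powr (\<gamma>+2) * Lp_norm 1 (\<lambda>v. jb v powr (\<gamma>+2)) g)" .
  show ?thesis
    by (rule conv_bound[OF _ nn]) (measurable, auto simp: L1_norm_eq intro!: integral_nonneg_AE)
qed



lemma young_simple:
  fixes a b q :: real
  assumes "0 \<le> a" "0 \<le> b" "1 < q"
  shows "a * b \<le> a powr q + b powr (q / (q - 1))"
proof (cases "a = 0 \<or> b = 0")
  case True thus ?thesis by auto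
next
  case False
  hence a: "0 < a" and b: "0 < b" using assms by auto
  show ?thesis
  proof (cases "b \<le> a powr (q - 1)")
    case True
    have "a * b \<le> a * a powr (q - 1)" using True a by simp
    also have "\<dots> = a powr q" using a by (simp add: powr_mult_base)
    finally show ?thesis using b by (smt (verit) powr_ge_zero)
  next
    case False
    hence "a powr (q - 1) < b" by simp
    hence "(a powr (q - 1)) powr (1/(q-1)) < b powr (1/(q-1))"
      using assms a by (intro powr_less_mono2) auto
    hence lt: "a < b powr (1/(q-1))" using assms a by (simp add: powr_powr)
    have "a * b \<le> b powr (1/(q-1)) * b" using lt b by simp
    also have "\<dots> = b powr (1/(q-1) + 1)" using b by (simp add: powr_add)
    also have "1/(q-1) + 1 = q / (q - 1)" using assms by (simp add: field_simps)
    finally show ?thesis using a by (smt (verit) powr_ge_zero)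
  qed
qed

lemma lborel_AE_False: "\<not> (AE x in (lborel :: (real^3) measure). False)"
proof
  assume "AE x in (lborel :: (real^3) measure). False"
  hence "ae_filter (lborel :: (real^3) measure) = bot" by (rule eventually_False[THEN iffD1])
  hence "emeasure (lborel :: (real^3) measure) (space lborel) = 0" by (rule ae_filter_eq_bot_iff[THEN iffD1])
  thus False by simp
qed

lemma m1: "(\<lambda>z::real^3. ennreal (indicator (ball (0::real^3) 1) z * norm z powr a)) \<in> borel_measurable borel"
  by (intro measurable_compose[OF _ measurable_ennreal] borel_measurable_times borel_measurable_indicator powr_real_measurable borel_measurable_const) (auto intro: borel_measurable_norm)

definition Kc :: "real \<Rightarrow> real" where
  "Kc a = enn2real (\<integral>\<^sup>+z. ennreal (indicator (ball (0::real^3) 1) z * norm z powr a) \<partial>lborel)"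

lemma Kc_eq:
  assumes "-3 < a" "a \<le> 0"
  shows "(\<integral>\<^sup>+z. ennreal (indicator (ball (0::real^3) 1) z * norm z powr a) \<partial>lborel) = ennreal (Kc a)"
    "0 \<le> Kc a"
  using ball_powr_finite[OF assms] unfolding Kc_def
  by (auto simp: less_top[symmetric] ennreal_enn2real_if)

lemma Kc_trans:
  assumes "-3 < a" "a \<le> 0"
  shows "(\<integral>\<^sup>+w. ennreal (indicator (ball (0::real^3) 1) (w - v) * norm (w - v) powr a) \<partial>lborel) = ennreal (Kc a)"
proof -
  have "(\<integral>\<^sup>+w. ennreal (indicator (ball (0::real^3) 1) (w - v) * norm (w - v) powr a) \<partial>lborel)
     = (\<integral>\<^sup>+z. ennreal (indicator (ball (0::real^3) 1) z * norm z powr a) \<partial>lborel)"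
    by (rule nn_translate[where h = "\<lambda>z. ennreal (indicator (ball (0::real^3) 1) z * norm z powr a)"]) (rule m1)
  thus ?thesis using Kc_eq[OF assms] by simp
qed



lemma m2: "(\<lambda>x::real^3. indicator (ball (0::real^3) 1) (x - v) * norm (x - v) powr a) \<in> borel_measurable borel"
proof -
  have r: "(\<lambda>z::real^3. indicator (ball (0::real^3) 1) z * norm z powr a) \<in> borel_measurable borel"
    by (intro borel_measurable_times borel_measurable_indicator powr_real_measurable borel_measurable_const)
      (auto intro: borel_measurable_norm)
  have "(\<lambda>x::real^3. x - v) \<in> borel_measurable borel"
    by (intro borel_measurable_continuous_onI continuous_intros)
  from measurable_compose[OF this r] show ?thesis by (simp add: o_def)
qed

lemma near_bound:
  assumes gd: "in_dual q g" and q: "1 \<le> q" and \<gamma>: "-2 < \<gamma>" "\<gamma> < 0" "q < 3 / \<bar>\<gamma>\<bar>"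
  shows "(\<integral>\<^sup>+w. ennreal (indicator (ball (0::real^3) 1) (w - v) * norm (w - v) powr \<gamma> * \<bar>g w\<bar>) \<partial>lborel)
           \<le> ennreal ((Kc (\<gamma>*q) + 1) * dual_norm q g) \<and> 0 \<le> dual_norm q g"
proof -
  define a where "a = (\<lambda>w::real^3. indicator (ball (0::real^3) 1) (w - v) * norm (w - v) powr \<gamma>)"
  have a0: "0 \<le> a w" for w unfolding a_def by simp
  have gq: "-3 < \<gamma> * q" "\<gamma> * q \<le> 0"
  proof -
    have "q * (-\<gamma>) < 3" using \<gamma> by (simp add: field_simps)
    thus "-3 < \<gamma> * q" by (simp add: algebra_simps)
    show "\<gamma> * q \<le> 0" using \<gamma> q by (simp add: mult_nonpos_nonneg)
  qed
  have Kpos: "0 \<le> Kc (\<gamma>*q)" using Kc_eq(2)[OF gq] .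
  show ?thesis
  proof (cases "q = 1")
    case True
    define E where "E = esssup lborel (\<lambda>x. ereal \<bar>g x\<bar>)"
    have gm: "g \<in> borel_measurable lborel" and Einf: "E < \<infinity>" using gd True unfolding in_dual_def E_def by auto
    have AEE: "AE x in lborel. ereal \<bar>g x\<bar> \<le> E" unfolding E_def by (rule esssup_AE)
    have E0: "0 \<le> E"
    proof (rule ccontr)
      assume "\<not> 0 \<le> E"
      hence pf: "ereal \<bar>g x\<bar> \<le> E \<Longrightarrow> False" for x
        by (smt (verit) ereal_less_eq(5) linorder_not_le order_trans abs_ge_zero)
      have "AE x in (lborel::(real^3) measure). False" using AEE by (rule eventually_mono) (rule pf)
      thus False using lborel_AE_False by blast
    qed
    define D where "D = real_of_ereal E"
    have ED: "E = ereal D" using E0 Einf unfolding D_def by (cases E) auto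
    have D0: "0 \<le> D" using E0 ED by simp
    have dn: "dual_norm q g = D" using True unfolding dual_norm_def Linf_norm_def D_def E_def by simp
    have AED: "AE x in lborel. \<bar>g x\<bar> \<le> D" using AEE by eventually_elim (simp add: ED)
    have "(\<integral>\<^sup>+w. ennreal (indicator (ball (0::real^3) 1) (w - v) * norm (w - v) powr \<gamma> * \<bar>g w\<bar>) \<partial>lborel)
        \<le> (\<integral>\<^sup>+w. ennreal D * ennreal (a w) \<partial>lborel)"
      using AED
    proof (intro nn_integral_mono_AE, eventually_elim)
      case (elim w)
      have "a w * \<bar>g w\<bar> \<le> a w * D" using elim a0[of w] by (intro mult_left_mono) auto
      thus ?case unfolding a_def using D0 by (simp add: ennreal_mult'[symmetric] ennreal_leI mult.commute)
    qed
    also have "\<dots> = ennreal D * (\<integral>\<^sup>+w. ennreal (a w) \<partial>lborel)"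
      by (rule nn_integral_cmult) (simp add: a_def m2)
    also have "(\<integral>\<^sup>+w. ennreal (a w) \<partial>lborel) = ennreal (Kc (\<gamma>*q))"
      unfolding a_def using Kc_trans[OF gq, of v] True by simp
    also have "ennreal D * ennreal (Kc (\<gamma>*q)) \<le> ennreal ((Kc (\<gamma>*q) + 1) * D)"
    proof -
      have "D * Kc (\<gamma>*q) \<le> (Kc (\<gamma>*q) + 1) * D" using D0 Kpos by (simp add: algebra_simps)
      thus ?thesis using D0 Kpos by (simp add: ennreal_mult'[symmetric] ennreal_leI)
    qed
    finally show ?thesis using dn D0 by simp
  next
    case False
    hence q1: "1 < q" using q by simp
    define r where "r = q / (q - 1)"
    have r1: "1 < r" using q1 unfolding r_def by (simp add: field_simps)
    have gm: "g \<in> borel_measurable lborel" and gi: "integrable lborel (\<lambda>x. \<bar>1 * g x\<bar> powr r)"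
      using gd False unfolding in_dual_def in_Lp_def r_def by auto
    define I where "I = (\<integral>x. \<bar>1 * g x\<bar> powr r \<partial>lborel)"
    have I0: "0 \<le> I" unfolding I_def by (intro integral_nonneg_AE) auto
    define D where "D = I powr (1/r)"
    have dn: "dual_norm q g = D" using False unfolding dual_norm_def Lp_norm_def D_def I_def r_def by simp
    have D0: "0 \<le> D" unfolding D_def by simp
    show ?thesis
    proof (cases "I = 0")
      case True
      have "AE x in lborel. \<bar>1 * g x\<bar> powr r = 0"
        using True gi unfolding I_def by (subst integral_nonneg_eq_0_iff_AE[symmetric]) auto
      hence AE0: "AE x in lborel. g x = 0" by eventually_elim simp
      have "(\<integral>\<^sup>+w. ennreal (indicator (ball (0::real^3) 1) (w - v) * norm (w - v) powr \<gamma> * \<bar>g w\<bar>) \<partial>lborel)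
         = (\<integral>\<^sup>+w. 0 \<partial>(lborel::(real^3) measure))"
        by (rule nn_integral_cong_AE) (use AE0 in \<open>auto elim!: eventually_mono\<close>)
      thus ?thesis using D0 Kpos dn by simp
    next
      case False
      hence Ipos: "0 < I" using I0 by simp
      hence Dpos: "0 < D" unfolding D_def by simp
      have DrI: "D powr r = I" unfolding D_def using r1 I0 by (simp add: powr_powr)
      have pw: "ennreal (indicator (ball (0::real^3) 1) (w - v) * norm (w - v) powr \<gamma> * \<bar>g w\<bar>)
           \<le> ennreal D * (ennreal (indicator (ball (0::real^3) 1) (w - v) * norm (w - v) powr (\<gamma>*q))
                 + ennreal (\<bar>1 * g w\<bar> powr r / I))" for w
      proof -
        have "a w * \<bar>g w\<bar> = D * (a w * (\<bar>g w\<bar> / D))" using Dpos by simp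
        also have "\<dots> \<le> D * (a w powr q + (\<bar>g w\<bar> / D) powr r)"
          using young_simple[OF a0[of w] _ q1, of "\<bar>g w\<bar> / D"] Dpos unfolding r_def
          by (intro mult_left_mono) auto
        also have "a w powr q = indicator (ball (0::real^3) 1) (w - v) * norm (w - v) powr (\<gamma>*q)"
          unfolding a_def by (simp add: indicator_def powr_powr)
        also have "(\<bar>g w\<bar> / D) powr r = \<bar>1 * g w\<bar> powr r / I"
          using Dpos by (simp add: powr_divide DrI)
        finally have "a w * \<bar>g w\<bar> \<le> D * (indicator (ball (0::real^3) 1) (w - v) * norm (w - v) powr (\<gamma>*q) + \<bar>1 * g w\<bar> powr r / I)" .
        thus ?thesis unfolding a_def using D0 Ipos
          by (simp add: ennreal_mult'[symmetric] ennreal_plus[symmetric] ennreal_leI del: ennreal_plus)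
      qed
      have "(\<integral>\<^sup>+w. ennreal (indicator (ball (0::real^3) 1) (w - v) * norm (w - v) powr \<gamma> * \<bar>g w\<bar>) \<partial>lborel)
        \<le> (\<integral>\<^sup>+w. ennreal D * (ennreal (indicator (ball (0::real^3) 1) (w - v) * norm (w - v) powr (\<gamma>*q))
                 + ennreal (\<bar>1 * g w\<bar> powr r / I)) \<partial>lborel)"
        by (rule nn_integral_mono) (rule pw)
      also have "\<dots> = ennreal D * ((\<integral>\<^sup>+w. ennreal (indicator (ball (0::real^3) 1) (w - v) * norm (w - v) powr (\<gamma>*q)) \<partial>lborel)
                 + (\<integral>\<^sup>+w. ennreal (\<bar>1 * g w\<bar> powr r / I) \<partial>lborel))"
      proof -
        have mA: "(\<lambda>w. ennreal (indicator (ball (0::real^3) 1) (w - v) * norm (w - v) powr (\<gamma>*q))) \<in> borel_measurable lborel"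
          using measurable_compose[OF m2 measurable_ennreal] by simp
        have mB: "(\<lambda>w. ennreal (\<bar>1 * g w\<bar> powr r / I)) \<in> borel_measurable lborel"
          using gm by measurable
        have "(\<integral>\<^sup>+w. ennreal D * (ennreal (indicator (ball (0::real^3) 1) (w - v) * norm (w - v) powr (\<gamma>*q))
                 + ennreal (\<bar>1 * g w\<bar> powr r / I)) \<partial>lborel) = ennreal D * (\<integral>\<^sup>+w. (ennreal (indicator (ball (0::real^3) 1) (w - v) * norm (w - v) powr (\<gamma>*q))
                 + ennreal (\<bar>1 * g w\<bar> powr r / I)) \<partial>lborel)"
          using mA mB by (intro nn_integral_cmult borel_measurable_add)
        also have "(\<integral>\<^sup>+w. (ennreal (indicator (ball (0::real^3) 1) (w - v) * norm (w - v) powr (\<gamma>*q))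
                 + ennreal (\<bar>1 * g w\<bar> powr r / I)) \<partial>lborel) = (\<integral>\<^sup>+w. ennreal (indicator (ball (0::real^3) 1) (w - v) * norm (w - v) powr (\<gamma>*q)) \<partial>lborel)
                 + (\<integral>\<^sup>+w. ennreal (\<bar>1 * g w\<bar> powr r / I) \<partial>lborel)"
          using mA mB by (rule nn_integral_add)
        finally show ?thesis .
      qed
      also have "(\<integral>\<^sup>+w. ennreal (indicator (ball (0::real^3) 1) (w - v) * norm (w - v) powr (\<gamma>*q)) \<partial>lborel) = ennreal (Kc (\<gamma>*q))"
        by (rule Kc_trans[OF gq])
      also have "(\<integral>\<^sup>+w. ennreal (\<bar>1 * g w\<bar> powr r / I) \<partial>lborel) = ennreal (\<integral>w. \<bar>1 * g w\<bar> powr r / I \<partial>lborel)"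
        using gi I0 by (intro nn_integral_eq_integral) auto
      also have "(\<integral>w. \<bar>1 * g w\<bar> powr r / I \<partial>lborel) = 1" using Ipos unfolding I_def by simp
      also have "ennreal D * (ennreal (Kc (\<gamma>*q)) + ennreal 1) = ennreal ((Kc (\<gamma>*q) + 1) * D)"
        using D0 Kpos by (simp add: ennreal_mult ennreal_plus mult.commute)
      finally show ?thesis using dn D0 by simp
    qed
  qed
qed



lemma conv_c_bound:
  assumes g1: "in_Lp 1 (\<lambda>_. 1) g" and gd: "in_dual q g" and q: "1 \<le> q"
    and \<gamma>: "-2 < \<gamma>" "\<gamma> < 0" "q < 3 / \<bar>\<gamma>\<bar>"
  shows "\<bar>conv (ckernel \<gamma>) g v\<bar> \<le> 2 * (\<gamma> + 3) * (Lp_norm 1 (\<lambda>_. 1) g + (Kc (\<gamma>*q) + 1) * dual_norm q g)"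
proof -
  have gm[measurable]: "g \<in> borel_measurable lborel" using g1 unfolding in_Lp_def by simp
  have gi: "integrable lborel (\<lambda>w. \<bar>g w\<bar>)" using g1 unfolding in_Lp_def by simp
  have nb: "(\<integral>\<^sup>+w. ennreal (indicator (ball (0::real^3) 1) (w - v) * norm (w - v) powr \<gamma> * \<bar>g w\<bar>) \<partial>lborel)
           \<le> ennreal ((Kc (\<gamma>*q) + 1) * dual_norm q g)" and D0: "0 \<le> dual_norm q g"
    using near_bound[OF gd q \<gamma>, of v] by auto
  have gq: "-3 < \<gamma> * q" "\<gamma> * q \<le> 0"
  proof -
    have "q * (-\<gamma>) < 3" using \<gamma> by (simp add: field_simps)
    thus "-3 < \<gamma> * q" by (simp add: algebra_simps)
    show "\<gamma> * q \<le> 0" using \<gamma> q by (simp add: mult_nonpos_nonneg)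
  qed
  have Kpos: "0 \<le> Kc (\<gamma>*q)" using Kc_eq(2)[OF gq] .
  define c where "c = 2 * (\<gamma> + 3)"
  have c0: "0 < c" using \<gamma> unfolding c_def by simp
  define A where "A = (\<lambda>w::real^3. indicator (ball (0::real^3) 1) (w - v) * norm (w - v) powr \<gamma>)"
  have A0: "0 \<le> A w" for w unfolding A_def by simp
  have mA0: "A \<in> borel_measurable lborel" using m2[of v \<gamma>] unfolding A_def by simp
  have mA: "(\<lambda>w. ennreal (A w * \<bar>g w\<bar>)) \<in> borel_measurable lborel"
    by (intro measurable_compose[OF _ measurable_ennreal] borel_measurable_times borel_measurable_abs mA0 gm)
  have mG: "(\<lambda>w. ennreal \<bar>g w\<bar>) \<in> borel_measurable lborel" by measurable
  have pw: "ennreal \<bar>ckernel \<gamma> (v - w) * g w\<bar> \<le> ennreal c * (ennreal (A w * \<bar>g w\<bar>) + ennreal \<bar>g w\<bar>)" for w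
  proof -
    have "norm (v - w) powr \<gamma> \<le> A w + 1"
    proof (cases "w - v \<in> ball 0 1")
      case True thus ?thesis unfolding A_def by (simp add: norm_minus_commute)
    next
      case False
      hence "1 \<le> norm (v - w)" by (simp add: dist_norm norm_minus_commute)
      hence "norm (v - w) powr \<gamma> \<le> 1 powr \<gamma>" using \<gamma> by (intro powr_mono2') auto
      thus ?thesis using A0[of w] by simp
    qed
    hence le1: "c * norm (v - w) powr \<gamma> * \<bar>g w\<bar> \<le> c * (A w + 1) * \<bar>g w\<bar>"
      using c0 by (intro mult_right_mono mult_left_mono) auto
    have "\<bar>ckernel \<gamma> (v - w) * g w\<bar> = c * norm (v - w) powr \<gamma> * \<bar>g w\<bar>"
      unfolding ckernel_def c_def using \<gamma> by (simp add: abs_mult)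
    hence "\<bar>ckernel \<gamma> (v - w) * g w\<bar> \<le> c * (A w * \<bar>g w\<bar> + \<bar>g w\<bar>)"
      using le1 by (simp add: algebra_simps)
    hence "\<bar>ckernel \<gamma> (v - w) * g w\<bar> \<le> c * (A w * \<bar>g w\<bar> + \<bar>g w\<bar>)" .
    moreover have "ennreal (c * (A w * \<bar>g w\<bar> + \<bar>g w\<bar>)) = ennreal c * (ennreal (A w * \<bar>g w\<bar>) + ennreal \<bar>g w\<bar>)"
      using c0 A0[of w] by (simp add: ennreal_mult ennreal_plus)
    ultimately show ?thesis by (metis ennreal_leI)
  qed
  have "(\<integral>\<^sup>+w. ennreal \<bar>ckernel \<gamma> (v - w) * g w\<bar> \<partial>lborel)
      \<le> (\<integral>\<^sup>+w. ennreal c * (ennreal (A w * \<bar>g w\<bar>) + ennreal \<bar>g w\<bar>) \<partial>lborel)"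
    by (rule nn_integral_mono) (rule pw)
  also have "\<dots> = ennreal c * (\<integral>\<^sup>+w. (ennreal (A w * \<bar>g w\<bar>) + ennreal \<bar>g w\<bar>) \<partial>lborel)"
    using mA mG by (intro nn_integral_cmult borel_measurable_add)
  also have "(\<integral>\<^sup>+w. (ennreal (A w * \<bar>g w\<bar>) + ennreal \<bar>g w\<bar>) \<partial>lborel)
      = (\<integral>\<^sup>+w. ennreal (A w * \<bar>g w\<bar>) \<partial>lborel) + (\<integral>\<^sup>+w. ennreal \<bar>g w\<bar> \<partial>lborel)"
    using mA mG by (rule nn_integral_add)
  also have "(\<integral>\<^sup>+w. ennreal \<bar>g w\<bar> \<partial>lborel) = ennreal (Lp_norm 1 (\<lambda>_. 1) g)"
    unfolding L1_norm_eq using gi by (simp add: nn_integral_eq_integral)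
  also have "(\<integral>\<^sup>+w. ennreal (A w * \<bar>g w\<bar>) \<partial>lborel) \<le> ennreal ((Kc (\<gamma>*q) + 1) * dual_norm q g)"
    using nb unfolding A_def .
  finally have nn: "(\<integral>\<^sup>+w. ennreal \<bar>ckernel \<gamma> (v - w) * g w\<bar> \<partial>lborel)
     \<le> ennreal (c * (Lp_norm 1 (\<lambda>_. 1) g + (Kc (\<gamma>*q) + 1) * dual_norm q g))"
    using c0 D0 Kpos
    by (simp add: ennreal_mult'[symmetric] ennreal_plus[symmetric] L1_norm_eq integral_nonneg_AE mult_left_mono add.commute del: ennreal_plus)
  have B0: "0 \<le> c * (Lp_norm 1 (\<lambda>_. 1) g + (Kc (\<gamma>*q) + 1) * dual_norm q g)"
    using c0 D0 Kpos by (auto simp: L1_norm_eq intro!: integral_nonneg_AE)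
  show ?thesis unfolding c_def[symmetric]
    by (rule conv_bound[OF _ nn B0]) measurable
qed



lemma partial_le_hess: "\<bar>partial i (partial j f) v\<bar> \<le> hess_norm f v"
proof -
  have "(partial i (partial j f) v)\<^sup>2 \<le> (\<Sum>j'\<in>UNIV. (partial i (partial j' f) v)\<^sup>2)"
    by (rule member_le_sum) auto
  also have "\<dots> \<le> (\<Sum>i'\<in>UNIV. \<Sum>j'\<in>UNIV. (partial i' (partial j' f) v)\<^sup>2)"
    by (rule member_le_sum[where f = "\<lambda>i'. \<Sum>j'\<in>UNIV. (partial i' (partial j' f) v)\<^sup>2"])
       (auto intro: sum_nonneg)
  finally have "sqrt ((partial i (partial j f) v)\<^sup>2) \<le> hess_norm f v"
    unfolding hess_norm_def by (rule real_sqrt_le_mono)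
  thus ?thesis by simp
qed

lemma Q_pointwise:
  assumes g: "in_Lp 1 (\<lambda>v. jb v powr (\<gamma>+2)) g" "in_Lp 1 (\<lambda>_. 1) g" "in_dual q g" and q: "1 \<le> q"
    and \<gamma>: "-2 < \<gamma>" "\<gamma> < 0" "q < 3 / \<bar>\<gamma>\<bar>"
  shows "\<bar>Landau_Q \<gamma> g f v\<bar> \<le> 36 * Lp_norm 1 (\<lambda>v. jb v powr (\<gamma>+2)) g * (jb v powr (\<gamma>+2) * hess_norm f v)
      + 2 * (\<gamma> + 3) * (Lp_norm 1 (\<lambda>_. 1) g + (Kc (\<gamma>*q) + 1) * dual_norm q g) * \<bar>f v\<bar>"
proof -
  define N where "N = Lp_norm 1 (\<lambda>v. jb v powr (\<gamma>+2)) g"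
  define T where "T = 4 * jb v powr (\<gamma>+2) * N"
  have N0: "0 \<le> N" unfolding N_def L1_norm_eq by (intro integral_nonneg_AE) auto
  have T0: "0 \<le> T" unfolding T_def using N0 by simp
  have H0: "0 \<le> hess_norm f v" unfolding hess_norm_def by (auto intro!: sum_nonneg)
  have tm: "\<bar>conv (akernel \<gamma> i j) g v * partial i (partial j f) v\<bar> \<le> T * hess_norm f v" for i j
    unfolding abs_mult T_def N_def
    by (intro mult_mono conv_a_bound[OF g(1) \<gamma>(1,2)] partial_le_hess) (use N0 in \<open>auto simp: N_def\<close>)
  have "\<bar>\<Sum>i\<in>UNIV. \<Sum>j\<in>UNIV. conv (akernel \<gamma> i j) g v * partial i (partial j f) v\<bar>
      \<le> (\<Sum>i\<in>(UNIV::3 set). \<Sum>j\<in>(UNIV::3 set). T * hess_norm f v)"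
  proof -
    have "\<bar>\<Sum>i\<in>UNIV. \<Sum>j\<in>UNIV. conv (akernel \<gamma> i j) g v * partial i (partial j f) v\<bar>
        \<le> (\<Sum>i\<in>UNIV. \<bar>\<Sum>j\<in>UNIV. conv (akernel \<gamma> i j) g v * partial i (partial j f) v\<bar>)"
      by (rule sum_abs)
    also have "\<dots> \<le> (\<Sum>i\<in>UNIV. \<Sum>j\<in>UNIV. \<bar>conv (akernel \<gamma> i j) g v * partial i (partial j f) v\<bar>)"
      by (intro sum_mono sum_abs)
    also have "\<dots> \<le> (\<Sum>i\<in>(UNIV::3 set). \<Sum>j\<in>(UNIV::3 set). T * hess_norm f v)"
      by (intro sum_mono tm)
    finally show ?thesis .
  qed
  also have "\<dots> = 9 * (T * hess_norm f v)" by simp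
  finally have A: "\<bar>\<Sum>i\<in>UNIV. \<Sum>j\<in>UNIV. conv (akernel \<gamma> i j) g v * partial i (partial j f) v\<bar>
      \<le> 36 * N * (jb v powr (\<gamma>+2) * hess_norm f v)" unfolding T_def by (simp add: algebra_simps)
  have B: "\<bar>conv (ckernel \<gamma>) g v * f v\<bar> \<le> 2 * (\<gamma> + 3) * (Lp_norm 1 (\<lambda>_. 1) g + (Kc (\<gamma>*q) + 1) * dual_norm q g) * \<bar>f v\<bar>"
    unfolding abs_mult by (intro mult_right_mono conv_c_bound[OF g(2,3) q \<gamma>]) auto
  show ?thesis unfolding Landau_Q_def N_def[symmetric] using A B by linarith
qed



lemma powr_sum_le:
  fixes a b t :: real assumes "0 \<le> a" "0 \<le> b" "0 < t"
  shows "(a + b) powr t \<le> 2 powr t * (a powr t + b powr t)"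
proof -
  have "(a + b) powr t \<le> (2 * max a b) powr t" using assms by (intro powr_mono2) auto
  also have "\<dots> = 2 powr t * max a b powr t" using assms by (simp add: powr_mult)
  also have "max a b powr t \<le> a powr t + b powr t" by (simp add: max_def)
  hence "2 powr t * max a b powr t \<le> 2 powr t * (a powr t + b powr t)" by simp
  finally show ?thesis .
qed

lemma powr_scale_inv:
  fixes c I p :: real assumes "0 \<le> c" "0 \<le> I" "0 < p"
  shows "(c powr p * I) powr (1/p) = c * I powr (1/p)"
  using assms by (simp add: powr_mult powr_powr)

lemma Q_meas:
  assumes g: "g \<in> borel_measurable lborel" and f: "f \<in> borel_measurable lborel" and C2: "C2 f"
  shows "Landau_Q \<gamma> g f \<in> borel_measurable lborel"
proof -
  have p: "partial i (partial j f) \<in> borel_measurable lborel" for i j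
  proof -
    have "continuous_on UNIV (partial i (partial j f))" using C2 unfolding C2_def by blast
    hence "partial i (partial j f) \<in> borel_measurable borel" by (rule borel_measurable_continuous_onI)
    thus ?thesis by simp
  qed
  have ca: "conv (akernel \<gamma> i j) g \<in> borel_measurable lborel" for i j
    by (rule conv_meas[OF akernel_meas g])
  have cc: "conv (ckernel \<gamma>) g \<in> borel_measurable lborel"
    by (rule conv_meas[OF ckernel_meas g])
  show ?thesis unfolding Landau_Q_def
    by (intro borel_measurable_diff borel_measurable_sum borel_measurable_times ca p cc f)
qed



theorem lemma4p4:
  fixes \<gamma> p q :: real
  assumes "-2 < \<gamma>" "\<gamma> < 0" "1 \<le> p" "1 \<le> q" "q < 3 / \<bar>\<gamma>\<bar>"
  shows "\<exists>C>0. \<forall>(m :: R3 \<Rightarrow> real) (g :: R3 \<Rightarrow> real) (f :: R3 \<Rightarrow> real).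
    (\<forall>v. 0 < m v) \<and> m \<in> borel_measurable lborel \<and>
    in_Lp 1 (\<lambda>v. jb v powr (\<gamma> + 2)) g \<and> in_Lp 1 (\<lambda>_. 1) g \<and> in_dual q g \<and>
    C2 f \<and> in_Lp p m f \<and> in_Lp p (\<lambda>v. m v * jb v powr (\<gamma> + 2)) (hess_norm f)
    \<longrightarrow>
    in_Lp p m (Landau_Q \<gamma> g f) \<and>
    Lp_norm p m (Landau_Q \<gamma> g f)
      \<le> C * (Lp_norm 1 (\<lambda>v. jb v powr (\<gamma> + 2)) g
               * Lp_norm p (\<lambda>v. m v * jb v powr (\<gamma> + 2)) (hess_norm f)
             + Lp_norm 1 (\<lambda>_. 1) g * Lp_norm p m f
             + dual_norm q g * Lp_norm p m f)"
proof -
  note \<gamma> = assms(1,2,5)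
  note q = assms(4)
  have p0: "0 < p" using assms(3) by simp
  have gq: "-3 < \<gamma> * q" "\<gamma> * q \<le> 0"
  proof -
    have "q * (-\<gamma>) < 3" using \<gamma> by (simp add: field_simps)
    thus "-3 < \<gamma> * q" by (simp add: algebra_simps)
    show "\<gamma> * q \<le> 0" using \<gamma> q by (simp add: mult_nonpos_nonneg)
  qed
  define K where "K = Kc (\<gamma>*q)"
  have K0: "0 \<le> K" unfolding K_def using Kc_eq(2)[OF gq] .
  define C where "C = 144 + 8 * (\<gamma> + 3) * (K + 1)"
  have C0: "0 < C" unfolding C_def using \<gamma> K0 by (simp add: add_pos_nonneg)
  show ?thesis
  proof (intro exI[of _ C] conjI allI impI C0)
    fix m g f :: "R3 \<Rightarrow> real"
    assume H: "(\<forall>v. 0 < m v) \<and> m \<in> borel_measurable lborel \<and>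
      in_Lp 1 (\<lambda>v. jb v powr (\<gamma> + 2)) g \<and> in_Lp 1 (\<lambda>_. 1) g \<and> in_dual q g \<and>
      C2 f \<and> in_Lp p m f \<and> in_Lp p (\<lambda>v. m v * jb v powr (\<gamma> + 2)) (hess_norm f)"
    hence mpos: "\<And>v. 0 < m v" and mm: "m \<in> borel_measurable lborel"
      and g1: "in_Lp 1 (\<lambda>v. jb v powr (\<gamma> + 2)) g" and g2: "in_Lp 1 (\<lambda>_. 1) g" and gd: "in_dual q g"
      and fC2: "C2 f" and fL: "in_Lp p m f" and hL: "in_Lp p (\<lambda>v. m v * jb v powr (\<gamma> + 2)) (hess_norm f)"
      by auto
    have gm: "g \<in> borel_measurable lborel" using g2 unfolding in_Lp_def by simp
    have fm: "f \<in> borel_measurable lborel" and fi: "integrable lborel (\<lambda>v. \<bar>m v * f v\<bar> powr p)"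
      using fL unfolding in_Lp_def by auto
    have hi: "integrable lborel (\<lambda>v. \<bar>m v * jb v powr (\<gamma> + 2) * hess_norm f v\<bar> powr p)"
      using hL unfolding in_Lp_def by auto
    define N1 where "N1 = Lp_norm 1 (\<lambda>v. jb v powr (\<gamma> + 2)) g"
    define N0 where "N0 = Lp_norm 1 (\<lambda>_. 1) g"
    define D where "D = dual_norm q g"
    define B0 where "B0 = 2 * (\<gamma> + 3) * (N0 + (K + 1) * D)"
    have N10: "0 \<le> N1" unfolding N1_def L1_norm_eq by (intro integral_nonneg_AE) auto
    have N00: "0 \<le> N0" unfolding N0_def L1_norm_eq by (intro integral_nonneg_AE) auto
    have D0: "0 \<le> D" unfolding D_def using near_bound[OF gd q \<gamma>] by blast
    have B00: "0 \<le> B0" unfolding B0_def using \<gamma> N00 K0 D0 by simp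
    define Q where "Q = Landau_Q \<gamma> g f"
    have Qm: "Q \<in> borel_measurable lborel" unfolding Q_def by (rule Q_meas[OF gm fm fC2])
    define h1 where "h1 = (\<lambda>v. \<bar>m v * jb v powr (\<gamma> + 2) * hess_norm f v\<bar> powr p)"
    define h2 where "h2 = (\<lambda>v. \<bar>m v * f v\<bar> powr p)"
    define G where "G = (\<lambda>v. 2 powr p * ((36 * N1) powr p * h1 v + B0 powr p * h2 v))"
    have Gi: "integrable lborel G" unfolding G_def h1_def h2_def using hi fi by auto
    have pw: "\<bar>m v * Q v\<bar> powr p \<le> G v" for v
    proof -
      have jbp: "0 < jb v" using jb_ge(2)[of v] by linarith
      have Hn: "0 \<le> hess_norm f v" unfolding hess_norm_def by (auto intro!: sum_nonneg)
      define X where "X = 36 * N1 * \<bar>m v * jb v powr (\<gamma> + 2) * hess_norm f v\<bar>"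
      define Y where "Y = B0 * \<bar>m v * f v\<bar>"
      have X0: "0 \<le> X" unfolding X_def using N10 by simp
      have Y0: "0 \<le> Y" unfolding Y_def using B00 by simp
      have "\<bar>Q v\<bar> \<le> 36 * N1 * (jb v powr (\<gamma>+2) * hess_norm f v) + B0 * \<bar>f v\<bar>"
        unfolding Q_def N1_def B0_def N0_def D_def K_def using Q_pointwise[OF g1 g2 gd q \<gamma>] by simp
      hence "m v * \<bar>Q v\<bar> \<le> m v * (36 * N1 * (jb v powr (\<gamma>+2) * hess_norm f v) + B0 * \<bar>f v\<bar>)"
        using mpos[of v] by (intro mult_left_mono) auto
      also have "\<dots> = X + Y" unfolding X_def Y_def using mpos[of v] jbp Hn
        by (simp add: abs_mult algebra_simps)
      finally have "\<bar>m v * Q v\<bar> \<le> X + Y" using mpos[of v] by (simp add: abs_mult)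
      hence "\<bar>m v * Q v\<bar> powr p \<le> (X + Y) powr p" using p0 by (intro powr_mono2) auto
      also have "\<dots> \<le> 2 powr p * (X powr p + Y powr p)" by (rule powr_sum_le[OF X0 Y0 p0])
      also have "X powr p = (36 * N1) powr p * h1 v" unfolding X_def h1_def using N10
        by (simp add: powr_mult)
      also have "Y powr p = B0 powr p * h2 v" unfolding Y_def h2_def using B00
        by (simp add: powr_mult)
      finally show ?thesis unfolding G_def .
    qed
    have mQm: "(\<lambda>v. \<bar>m v * Q v\<bar> powr p) \<in> borel_measurable lborel"
      using mm Qm by measurable
    have Qi: "integrable lborel (\<lambda>v. \<bar>m v * Q v\<bar> powr p)"
      by (rule Bochner_Integration.integrable_bound[OF Gi mQm]) (auto intro!: AE_I2 order_trans[OF pw])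
    show "in_Lp p m (Landau_Q \<gamma> g f)" unfolding in_Lp_def Q_def[symmetric] using Qm Qi by simp
    define IH where "IH = (\<integral>v. h1 v \<partial>lborel)"
    define IF where "IF = (\<integral>v. h2 v \<partial>lborel)"
    have IH0: "0 \<le> IH" unfolding IH_def h1_def by (intro integral_nonneg_AE) auto
    have IF0: "0 \<le> IF" unfolding IF_def h2_def by (intro integral_nonneg_AE) auto
    have Hp: "Lp_norm p (\<lambda>v. m v * jb v powr (\<gamma> + 2)) (hess_norm f) = IH powr (1/p)"
      unfolding Lp_norm_def IH_def h1_def by simp
    have Fp: "Lp_norm p m f = IF powr (1/p)"
      unfolding Lp_norm_def IF_def h2_def by simp
    define Z where "Z = (36 * N1) powr p * IH + B0 powr p * IF"
    have Z0: "0 \<le> Z" unfolding Z_def using IH0 IF0 by simp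
    have "(\<integral>v. \<bar>m v * Q v\<bar> powr p \<partial>lborel) \<le> (\<integral>v. G v \<partial>lborel)"
      by (rule integral_mono[OF Qi Gi pw])
    also have "(\<integral>v. G v \<partial>lborel) = 2 powr p * Z"
      unfolding G_def Z_def IH_def IF_def using hi fi unfolding h1_def h2_def by simp
    finally have intle: "(\<integral>v. \<bar>m v * Q v\<bar> powr p \<partial>lborel) \<le> 2 powr p * Z" .
    have "Lp_norm p m Q = (\<integral>v. \<bar>m v * Q v\<bar> powr p \<partial>lborel) powr (1/p)" unfolding Lp_norm_def ..
    also have "\<dots> \<le> (2 powr p * Z) powr (1/p)"
      using intle p0 by (intro powr_mono2) (auto intro!: integral_nonneg_AE)
    also have "\<dots> = 2 * Z powr (1/p)" using powr_scale_inv[of 2 Z p] Z0 p0 by simp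
    also have "Z powr (1/p) \<le> 2 powr (1/p) * (((36 * N1) powr p * IH) powr (1/p) + (B0 powr p * IF) powr (1/p))"
      unfolding Z_def using IH0 IF0 p0 by (intro powr_sum_le) auto
    also have "((36 * N1) powr p * IH) powr (1/p) = 36 * N1 * IH powr (1/p)"
      using N10 IH0 p0 by (intro powr_scale_inv) auto
    also have "(B0 powr p * IF) powr (1/p) = B0 * IF powr (1/p)"
      using B00 IF0 p0 by (intro powr_scale_inv) auto
    finally have L1: "Lp_norm p m Q \<le> 2 * (2 powr (1/p) * (36 * N1 * IH powr (1/p) + B0 * IF powr (1/p)))"
      by simp
    have two: "2 powr (1/p) \<le> 2 powr 1" using assms(3) by (intro powr_mono) auto
    have S0: "0 \<le> 36 * N1 * IH powr (1/p) + B0 * IF powr (1/p)" using N10 B00 by simp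
    have "Lp_norm p m Q \<le> 4 * (36 * N1 * IH powr (1/p) + B0 * IF powr (1/p))"
      using L1 mult_right_mono[OF two S0] by simp
    also have "\<dots> = 144 * (N1 * IH powr (1/p)) + 8 * (\<gamma>+3) * (N0 * IF powr (1/p)) + 8 * (\<gamma>+3) * (K+1) * (D * IF powr (1/p))"
      unfolding B0_def by (simp add: algebra_simps)
    also have "\<dots> \<le> C * (N1 * IH powr (1/p) + N0 * IF powr (1/p) + D * IF powr (1/p))"
    proof -
      have a: "0 \<le> N1 * IH powr (1/p)" "0 \<le> N0 * IF powr (1/p)" "0 \<le> D * IF powr (1/p)"
        using N10 N00 D0 by auto
      have b: "8 * (\<gamma>+3) \<le> 8 * (\<gamma>+3) * (K+1)" using \<gamma> K0 by simp
      have pos3: "0 \<le> 8 * (\<gamma>+3) * (K+1)" using \<gamma> K0 by simp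
      have c1: "144 \<le> C" "8 * (\<gamma>+3) * (K+1) \<le> C" unfolding C_def using pos3 by auto
      have c2: "8 * (\<gamma>+3) \<le> C" using b c1 by linarith
      have "144 * (N1 * IH powr (1/p)) \<le> C * (N1 * IH powr (1/p))"
        using a c1 by (intro mult_right_mono) auto
      moreover have "8 * (\<gamma>+3) * (N0 * IF powr (1/p)) \<le> C * (N0 * IF powr (1/p))"
        using a c2 by (intro mult_right_mono) auto
      moreover have "8 * (\<gamma>+3) * (K+1) * (D * IF powr (1/p)) \<le> C * (D * IF powr (1/p))"
        using a c1 by (intro mult_right_mono) auto
      ultimately show ?thesis by (simp add: algebra_simps)
    qed
    finally show "Lp_norm p m (Landau_Q \<gamma> g f)
      \<le> C * (Lp_norm 1 (\<lambda>v. jb v powr (\<gamma> + 2)) g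
               * Lp_norm p (\<lambda>v. m v * jb v powr (\<gamma> + 2)) (hess_norm f)
             + Lp_norm 1 (\<lambda>_. 1) g * Lp_norm p m f
             + dual_norm q g * Lp_norm p m f)"
      unfolding Q_def[symmetric] Hp Fp N1_def[symmetric] N0_def[symmetric] D_def[symmetric] .
  qed
qed

end
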